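(* Let $\mu\in\mathcal{D}(\mathrm{Mem}[S])$, let $\mathcal{S}=\{S_1,\dots,S_N\}$ be a partition of $S$, let $\mathcal{T}=\{T_1,\dots,T_N\}$ be a partition of a finite set $T$ of variables, and let $f_i:\mathrm{Mem}[S_i]\to\mathrm{Mem}[T_i]$ ($1\le i\le N$) be either all non-decreasing or all non-increasing with respect to the pointwise orders. Let $\mu'\in\mathcal{D}(\mathrm{Mem}[T])$ be the distribution of the memory $f_1(p_{S_1}m)\bowtie\cdots\bowtie f_N(p_{S_N}m)$ for $m\sim\mu$, where $\bowtie$ denotes union of memories with disjoint domains. If $\mu$ is $\mathcal{S}$-PNA, then $\mu'$ is $\mathcal{T}$-PNA.
   Context: Values are real numbers; for finite $S$, $\mathrm{Mem}[S]$ is the set of maps $S\to\mathbb{R}$ ordered pointwise; $p_A$ is restriction; $\mathcal{D}(\cdot)$ denotes countably supported probability distributions. A partition is a set of pairwise disjoint nonempty sets; $\mathcal{T}$ coarsens $\mathcal{S}$ if $\bigcup\mathcal{T}=\bigcup\mathcal{S}$ and each element of $\mathcal{T}$ is a union of a subfamily of $\mathcal{S}$. For a partition $\mathcal{S}$ with $\bigcup\mathcal{S}\subseteq\mathrm{dom}(\mu)$, $\mu$ is $\mathcal{S}$-PNA if for every $\mathcal{T}$ coarsening $\mathcal{S}$ and every family $(f_A:\mathrm{Mem}[A]\to[0,\infty))_{A\in\mathcal{T}}$ all non-decreasing or all non-increasing, $\mathbb{E}_{m\sim\mu}[\prod_{A\in\mathcal{T}}f_A(p_Am)]\le\prod_{A\in\mathcal{T}}\mathbb{E}_{m\sim\mu}[f_A(p_Am)]$.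 *)

theory Defs
  imports "HOL-Probability.Probability"
begin

text \<open>Memories over a finite set of variables D: maps D to the reals, represented
  as extensional functions (value undefined outside D).\<close>
definition Mem :: "'v set \<Rightarrow> ('v \<Rightarrow> real) set" where
  "Mem D = (D \<rightarrow>\<^sub>E (UNIV :: real set))"

definition mem_le :: "'v set \<Rightarrow> ('v \<Rightarrow> real) \<Rightarrow> ('v \<Rightarrow> real) \<Rightarrow> bool" where
  "mem_le D m m' = (\<forall>x\<in>D. m x \<le> m' x)"

definition proj :: "'v set \<Rightarrow> ('v \<Rightarrow> real) \<Rightarrow> ('v \<Rightarrow> real)" where
  "proj A m = restrict m A"

definition is_partition :: "'v set set \<Rightarrow> bool" where
  "is_partition P = ((\<forall>A\<in>P. A \<noteq> {}) \<and> pairwise disjnt P)"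

definition coarsens :: "'v set set \<Rightarrow> 'v set set \<Rightarrow> bool" where
  "coarsens T S = (is_partition T \<and> \<Union>T = \<Union>S \<and> (\<forall>A\<in>T. \<exists>F\<subseteq>S. A = \<Union>F))"

definition nondecr_on :: "'v set \<Rightarrow> (('v \<Rightarrow> real) \<Rightarrow> real) \<Rightarrow> bool" where
  "nondecr_on A f = (\<forall>m\<in>Mem A. \<forall>m'\<in>Mem A. mem_le A m m' \<longrightarrow> f m \<le> f m')"

definition nonincr_on :: "'v set \<Rightarrow> (('v \<Rightarrow> real) \<Rightarrow> real) \<Rightarrow> bool" where
  "nonincr_on A f = (\<forall>m\<in>Mem A. \<forall>m'\<in>Mem A. mem_le A m m' \<longrightarrow> f m' \<le> f m)"

text \<open>S-PNA (negative association w.r.t. the partition S). Expectations of the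
  nonnegative functions are taken as extended nonnegative reals (nn_integral),
  so infinite expectations are allowed.\<close>
definition PNA :: "('v \<Rightarrow> real) pmf \<Rightarrow> 'v set set \<Rightarrow> bool" where
  "PNA \<mu> S = (\<forall>T (f :: 'v set \<Rightarrow> ('v \<Rightarrow> real) \<Rightarrow> real). coarsens T S \<longrightarrow>
      (\<forall>A\<in>T. \<forall>m\<in>Mem A. 0 \<le> f A m) \<longrightarrow>
      ((\<forall>A\<in>T. nondecr_on A (f A)) \<or> (\<forall>A\<in>T. nonincr_on A (f A))) \<longrightarrow>
      (\<integral>\<^sup>+ m. ennreal (\<Prod>A\<in>T. f A (proj A m)) \<partial>measure_pmf \<mu>)
        \<le> (\<Prod>A\<in>T. \<integral>\<^sup>+ m. ennreal (f A (proj A m)) \<partial>measure_pmf \<mu>))"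

definition mem_nondecr :: "'v set \<Rightarrow> 'v set \<Rightarrow> (('v \<Rightarrow> real) \<Rightarrow> ('v \<Rightarrow> real)) \<Rightarrow> bool" where
  "mem_nondecr A B g = (\<forall>m\<in>Mem A. \<forall>m'\<in>Mem A. mem_le A m m' \<longrightarrow> mem_le B (g m) (g m'))"

definition mem_nonincr :: "'v set \<Rightarrow> 'v set \<Rightarrow> (('v \<Rightarrow> real) \<Rightarrow> ('v \<Rightarrow> real)) \<Rightarrow> bool" where
  "mem_nonincr A B g = (\<forall>m\<in>Mem A. \<forall>m'\<in>Mem A. mem_le A m m' \<longrightarrow> mem_le B (g m') (g m))"

definition join_mems :: "nat \<Rightarrow> (nat \<Rightarrow> 'v set) \<Rightarrow> (nat \<Rightarrow> ('v \<Rightarrow> real)) \<Rightarrow> ('v \<Rightarrow> real)" where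
  "join_mems N Tp g = (\<lambda>x. if \<exists>i<N. x \<in> Tp i then g (THE i. i < N \<and> x \<in> Tp i) x else undefined)"

end

theory Submission
  imports Defs
begin

lemma join_at:
  assumes "\<forall>i<N. \<forall>j<N. i \<noteq> j \<longrightarrow> Tp i \<inter> Tp j = {}" "j < N" "x \<in> Tp j"
  shows "join_mems N Tp g x = g j x"
proof -
  have "(THE i. i < N \<and> x \<in> Tp i) = j"
    using assms by (intro the_equality) blast+
  then show ?thesis using assms unfolding join_mems_def by auto
qed

lemma proj_Mem: "proj A m \<in> Mem A"
  unfolding proj_def Mem_def by auto

theorem mainTheorem18:
  fixes \<mu> :: "('v \<Rightarrow> real) pmf"
    and S T :: "'v set" and N :: nat
    and Sp Tp :: "nat \<Rightarrow> 'v set"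
    and f :: "nat \<Rightarrow> ('v \<Rightarrow> real) \<Rightarrow> ('v \<Rightarrow> real)"
  assumes finS: "finite S" and finT: "finite T"
    and supp: "set_pmf \<mu> \<subseteq> Mem S"
    and Spart: "(\<forall>i<N. Sp i \<noteq> {}) \<and> (\<forall>i<N. \<forall>j<N. i \<noteq> j \<longrightarrow> Sp i \<inter> Sp j = {})
                \<and> (\<Union>i<N. Sp i) = S"
    and Tpart: "(\<forall>i<N. Tp i \<noteq> {}) \<and> (\<forall>i<N. \<forall>j<N. i \<noteq> j \<longrightarrow> Tp i \<inter> Tp j = {})
                \<and> (\<Union>i<N. Tp i) = T"
    and fmap: "\<forall>i<N. \<forall>m\<in>Mem (Sp i). f i m \<in> Mem (Tp i)"
    and fmono: "(\<forall>i<N. mem_nondecr (Sp i) (Tp i) (f i)) \<or> (\<forall>i<N. mem_nonincr (Sp i) (Tp i) (f i))"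
    and pna: "PNA \<mu> (Sp ` {..<N})"
  shows "PNA (map_pmf (\<lambda>m. join_mems N Tp (\<lambda>i. f i (proj (Sp i) m))) \<mu>) (Tp ` {..<N})"
  unfolding PNA_def
proof (intro allI impI)
  fix T' :: "'v set set" and F :: "'v set \<Rightarrow> ('v \<Rightarrow> real) \<Rightarrow> real"
  assume cT: "coarsens T' (Tp ` {..<N})"
    and nn: "\<forall>A\<in>T'. \<forall>m\<in>Mem A. 0 \<le> F A m"
    and Fmono: "(\<forall>A\<in>T'. nondecr_on A (F A)) \<or> (\<forall>A\<in>T'. nonincr_on A (F A))"
  have Tne: "\<And>i. i < N \<Longrightarrow> Tp i \<noteq> {}" using Tpart by blast
  have Tdis: "\<forall>i<N. \<forall>j<N. i \<noteq> j \<longrightarrow> Tp i \<inter> Tp j = {}" using Tpart by blast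
  have Sne: "\<And>i. i < N \<Longrightarrow> Sp i \<noteq> {}" using Spart by blast
  have Sdis: "\<And>i j. i < N \<Longrightarrow> j < N \<Longrightarrow> i \<noteq> j \<Longrightarrow> Sp i \<inter> Sp j = {}" using Spart by blast
  have T'ne: "\<And>A. A \<in> T' \<Longrightarrow> A \<noteq> {}" using cT unfolding coarsens_def is_partition_def by blast
  have T'dis: "\<And>A A'. A \<in> T' \<Longrightarrow> A' \<in> T' \<Longrightarrow> A \<noteq> A' \<Longrightarrow> A \<inter> A' = {}"
  proof -
    have "pairwise disjnt T'" using cT by (simp add: coarsens_def is_partition_def)
    then show "\<And>A A'. A \<in> T' \<Longrightarrow> A' \<in> T' \<Longrightarrow> A \<noteq> A' \<Longrightarrow> A \<inter> A' = {}"
      by (meson disjnt_def pairwiseD)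
  qed
  have T'un: "\<Union>T' = (\<Union>i<N. Tp i)" using cT unfolding coarsens_def by auto
  have T'F: "\<And>A. A \<in> T' \<Longrightarrow> \<exists>G\<subseteq>Tp ` {..<N}. A = \<Union>G" using cT unfolding coarsens_def by auto
  define I where "I A = {i. i < N \<and> Tp i \<subseteq> A}" for A
  define Bof where "Bof A = (\<Union>i\<in>I A. Sp i)" for A
  have a: "A = (\<Union>i\<in>I A. Tp i)" if "A \<in> T'" for A
  proof -
    obtain G where G: "G \<subseteq> Tp ` {..<N}" "A = \<Union>G" using T'F[OF \<open>A \<in> T'\<close>] by blast
    show ?thesis
    proof
      show "A \<subseteq> (\<Union>i\<in>I A. Tp i)"
      proof
        fix x assume "x \<in> A"
        then obtain X where "X \<in> G" "x \<in> X" using G by blast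
        then obtain i where "i < N" "X = Tp i" using G by blast
        then show "x \<in> (\<Union>i\<in>I A. Tp i)" using \<open>X \<in> G\<close> \<open>x \<in> X\<close> G unfolding I_def by blast
      qed
      show "(\<Union>i\<in>I A. Tp i) \<subseteq> A" unfolding I_def by blast
    qed
  qed
  have b: "i \<in> I A" if "A \<in> T'" "x \<in> A" "i < N" "x \<in> Tp i" for A x i
  proof -
    obtain j where "j \<in> I A" "x \<in> Tp j" using a[OF \<open>A \<in> T'\<close>] \<open>x \<in> A\<close> by blast
    then have "j = i" using Tdis that unfolding I_def by blast
    then show ?thesis using \<open>j \<in> I A\<close> by simp
  qed
  have c: "I A \<noteq> {}" if "A \<in> T'" for A
    using a[OF that] T'ne[OF that] by auto
  have d: "I A \<inter> I A' = {}" if "A \<in> T'" "A' \<in> T'" "A \<noteq> A'" for A A'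
  proof (rule ccontr)
    assume "I A \<inter> I A' \<noteq> {}"
    then obtain i where "i < N" "Tp i \<subseteq> A" "Tp i \<subseteq> A'" unfolding I_def by blast
    then show False using Tne[OF \<open>i < N\<close>] T'dis[OF that] by blast
  qed
  have e: "\<exists>A\<in>T'. i \<in> I A" if "i < N" for i
  proof -
    obtain x where "x \<in> Tp i" using Tne[OF \<open>i < N\<close>] by blast
    then obtain A where "A \<in> T'" "x \<in> A" using T'un \<open>i < N\<close> by blast
    then show ?thesis using b \<open>x \<in> Tp i\<close> that by blast
  qed
  have Bdis: "Bof A \<inter> Bof A' = {}" if "A \<in> T'" "A' \<in> T'" "A \<noteq> A'" for A A'
  proof -
    have "Sp i \<inter> Sp j = {}" if "i \<in> I A" "j \<in> I A'" for i j
      using d[OF \<open>A \<in> T'\<close> \<open>A' \<in> T'\<close> \<open>A \<noteq> A'\<close>] that Sdis unfolding I_def by blast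
    then show ?thesis unfolding Bof_def by blast
  qed
  have Bne: "Bof A \<noteq> {}" if "A \<in> T'" for A
    using c[OF that] Sne unfolding Bof_def I_def by blast
  have inj: "inj_on Bof T'"
  proof (rule inj_onI)
    fix A A' assume "A \<in> T'" "A' \<in> T'" "Bof A = Bof A'"
    then show "A = A'" using Bdis Bne by (metis inf.idem)
  qed
  have coB: "coarsens (Bof ` T') (Sp ` {..<N})"
    unfolding coarsens_def is_partition_def
  proof (intro conjI)
    show "\<forall>A\<in>Bof ` T'. A \<noteq> {}" using Bne by blast
    show "pairwise disjnt (Bof ` T')"
      unfolding pairwise_def disjnt_def using Bdis by blast
    show "\<Union> (Bof ` T') = \<Union> (Sp ` {..<N})"
    proof
      show "\<Union> (Bof ` T') \<subseteq> \<Union> (Sp ` {..<N})" unfolding Bof_def I_def by blast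
      show "\<Union> (Sp ` {..<N}) \<subseteq> \<Union> (Bof ` T')"
      proof
        fix x assume "x \<in> \<Union> (Sp ` {..<N})"
        then obtain i where "i < N" "x \<in> Sp i" by blast
        then obtain A where "A \<in> T'" "i \<in> I A" using e by blast
        then show "x \<in> \<Union> (Bof ` T')" using \<open>x \<in> Sp i\<close> unfolding Bof_def by blast
      qed
    qed
    show "\<forall>A\<in>Bof ` T'. \<exists>F\<subseteq>Sp ` {..<N}. A = \<Union> F"
    proof
      fix B assume "B \<in> Bof ` T'"
      then obtain A where "B = Bof A" by blast
      then have "B = \<Union>(Sp ` I A)" "Sp ` I A \<subseteq> Sp ` {..<N}" unfolding Bof_def I_def by auto
      then show "\<exists>F\<subseteq>Sp ` {..<N}. B = \<Union> F" by blast
    qed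
  qed
  define J where "J m = join_mems N Tp (\<lambda>i. f i (proj (Sp i) m))" for m
  define H where "H A m = proj A (J m)" for A m
  have HMem: "H A m \<in> Mem A" for A m unfolding H_def by (rule proj_Mem)
  have jx: "\<exists>j. j \<in> I A \<and> x \<in> Tp j" if "A \<in> T'" "x \<in> A" for A x
    using a[OF that(1)] that(2) by blast
  have Hx: "H A m x = f j (proj (Sp j) m) x" if "j < N" "x \<in> A" "x \<in> Tp j" for A m x j
    unfolding H_def J_def proj_def using join_at[OF Tdis that(1) that(3)] that(2) by simp
  have Hproj: "H A (proj (Bof A) m) = H A m" if "A \<in> T'" for A m
  proof
    fix x show "H A (proj (Bof A) m) x = H A m x"
    proof (cases "x \<in> A")
      case True
      then obtain j where j: "j \<in> I A" "x \<in> Tp j" using jx[OF \<open>A \<in> T'\<close>] by blast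
      then have "j < N" unfolding I_def by simp
      have "Sp j \<subseteq> Bof A" using j unfolding Bof_def by blast
      then have "proj (Sp j) (proj (Bof A) m) = proj (Sp j) m" unfolding proj_def
        by (intro ext) (auto simp: restrict_def)
      then show ?thesis using Hx[OF \<open>j < N\<close> True j(2)] by simp
    next
      case False then show ?thesis unfolding H_def proj_def by simp
    qed
  qed
  have projle: "mem_le (Sp j) (proj (Sp j) m) (proj (Sp j) m')"
    if "mem_le B m m'" "Sp j \<subseteq> B" for B j m m'
    using that unfolding mem_le_def proj_def by auto
  have Hup: "mem_le A (H A m) (H A m')"
    if "\<forall>i<N. mem_nondecr (Sp i) (Tp i) (f i)" "A \<in> T'" "mem_le (Bof A) m m'" for A m m'
    unfolding mem_le_def
  proof
    fix x assume "x \<in> A"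
    then obtain j where j: "j \<in> I A" "x \<in> Tp j" using jx[OF \<open>A \<in> T'\<close>] by blast
    then have jN: "j < N" unfolding I_def by simp
    have "Sp j \<subseteq> Bof A" using j unfolding Bof_def by blast
    then have "mem_le (Tp j) (f j (proj (Sp j) m)) (f j (proj (Sp j) m'))"
      using that(1) jN projle[OF that(3)] proj_Mem unfolding mem_nondecr_def by blast
    then show "H A m x \<le> H A m' x" using Hx[OF jN \<open>x \<in> A\<close> j(2)] j(2) unfolding mem_le_def by simp
  qed
  have Hdown: "mem_le A (H A m') (H A m)"
    if "\<forall>i<N. mem_nonincr (Sp i) (Tp i) (f i)" "A \<in> T'" "mem_le (Bof A) m m'" for A m m'
    unfolding mem_le_def
  proof
    fix x assume "x \<in> A"
    then obtain j where j: "j \<in> I A" "x \<in> Tp j" using jx[OF \<open>A \<in> T'\<close>] by blast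
    then have jN: "j < N" unfolding I_def by simp
    have "Sp j \<subseteq> Bof A" using j unfolding Bof_def by blast
    then have "mem_le (Tp j) (f j (proj (Sp j) m')) (f j (proj (Sp j) m))"
      using that(1) jN projle[OF that(3)] proj_Mem unfolding mem_nonincr_def by blast
    then show "H A m' x \<le> H A m x" using Hx[OF jN \<open>x \<in> A\<close> j(2)] j(2) unfolding mem_le_def by simp
  qed
  define G where "G B m = F (inv_into T' Bof B) (H (inv_into T' Bof B) m)" for B m
  have GB: "G (Bof A) m = F A (H A m)" if "A \<in> T'" for A m
    unfolding G_def using inv_into_f_f[OF inj that] by simp
  have Gnn: "\<forall>B\<in>Bof ` T'. \<forall>m\<in>Mem B. 0 \<le> G B m"
    using nn HMem GB by auto
  have Gmono: "(\<forall>B\<in>Bof ` T'. nondecr_on B (G B)) \<or> (\<forall>B\<in>Bof ` T'. nonincr_on B (G B))"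
    using fmono
  proof
    assume fu: "\<forall>i<N. mem_nondecr (Sp i) (Tp i) (f i)"
    from Fmono show ?thesis
    proof
      assume "\<forall>A\<in>T'. nondecr_on A (F A)"
      then have "\<forall>B\<in>Bof ` T'. nondecr_on B (G B)"
        unfolding nondecr_on_def using GB Hup[OF fu] HMem by auto
      then show ?thesis by blast
    next
      assume "\<forall>A\<in>T'. nonincr_on A (F A)"
      then have "\<forall>B\<in>Bof ` T'. nonincr_on B (G B)"
        unfolding nonincr_on_def using GB Hup[OF fu] HMem by auto
      then show ?thesis by blast
    qed
  next
    assume fd: "\<forall>i<N. mem_nonincr (Sp i) (Tp i) (f i)"
    from Fmono show ?thesis
    proof
      assume "\<forall>A\<in>T'. nondecr_on A (F A)"
      then have "\<forall>B\<in>Bof ` T'. nonincr_on B (G B)"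
        unfolding nondecr_on_def nonincr_on_def using GB Hdown[OF fd] HMem by auto
      then show ?thesis by blast
    next
      assume "\<forall>A\<in>T'. nonincr_on A (F A)"
      then have "\<forall>B\<in>Bof ` T'. nondecr_on B (G B)"
        unfolding nondecr_on_def nonincr_on_def using GB Hdown[OF fd] HMem by auto
      then show ?thesis by blast
    qed
  qed
  have ineq: "(\<integral>\<^sup>+ m. ennreal (\<Prod>B\<in>Bof ` T'. G B (proj B m)) \<partial>measure_pmf \<mu>)
        \<le> (\<Prod>B\<in>Bof ` T'. \<integral>\<^sup>+ m. ennreal (G B (proj B m)) \<partial>measure_pmf \<mu>)"
    using pna coB Gnn Gmono unfolding PNA_def by blast
  have eq1: "(\<Prod>B\<in>Bof ` T'. G B (proj B m)) = (\<Prod>A\<in>T'. F A (proj A (J m)))" for m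
    using prod.reindex[OF inj, of "\<lambda>B. G B (proj B m)"] GB Hproj
    by (simp add: H_def cong: prod.cong)
  have eq2: "(\<Prod>B\<in>Bof ` T'. \<integral>\<^sup>+ m. ennreal (G B (proj B m)) \<partial>measure_pmf \<mu>)
     = (\<Prod>A\<in>T'. \<integral>\<^sup>+ m. ennreal (F A (proj A (J m))) \<partial>measure_pmf \<mu>)"
    using prod.reindex[OF inj, of "\<lambda>B. \<integral>\<^sup>+ m. ennreal (G B (proj B m)) \<partial>measure_pmf \<mu>"] GB Hproj
    by (simp add: H_def cong: prod.cong)
  show "(\<integral>\<^sup>+ m. ennreal (\<Prod>A\<in>T'. F A (proj A m))
          \<partial>measure_pmf (map_pmf (\<lambda>m. join_mems N Tp (\<lambda>i. f i (proj (Sp i) m))) \<mu>))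
        \<le> (\<Prod>A\<in>T'. \<integral>\<^sup>+ m. ennreal (F A (proj A m))
          \<partial>measure_pmf (map_pmf (\<lambda>m. join_mems N Tp (\<lambda>i. f i (proj (Sp i) m))) \<mu>))"
    using ineq unfolding eq1 eq2 by (simp add: J_def)
qed

end
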